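(* Let $M\ge1$, let $(\tau^\prime,R)$ be an $M$-layer medium, let $\mathsf{p}\in\mathsf{S}_M^\prime$ be a transmission scattering sequence, and set $(k,m)=(\kappa^\prime(\mathsf{p}),\beta^\prime(\mathsf{p}))$. Then \[ w(\mathsf{p})=(-R)^{\tilde{k}-m}R^{k-m}T^{2m+\mathbb{1}}. \]
   Context: Fix depths $z_{-1}<z_0<\cdots<z_M<z_{M+1}$ and reals $R=(R_0,\ldots,R_M)$ with $-1<R_n<1$ (the travel times $\tau^\prime$ play no role); $T_n=\sqrt{1-R_n^2}$, $T=(T_0,\ldots,T_M)$. A transmission scattering sequence is a finite sequence $\mathsf{p}=(\mathsf{p}_0,\ldots,\mathsf{p}_L)$ with $\mathsf{p}_0=z_{-1}$, $\mathsf{p}_L=z_{M+1}$, $\mathsf{p}_i\in\{z_0,\ldots,z_M\}$ for $1\le i\le L-1$, and for every $0\le i\le L-1$ there is $-1\le j\le M$ with $\{\mathsf{p}_i,\mathsf{p}_{i+1}\}=\{z_j,z_{j+1}\}$; $\mathsf{S}_M^\prime$ is the set of these. Its weight is $w(\mathsf{p})=\prod_{i=1}^{L-1}w_i$ where, if $\mathsf{p}_i=z_j$: $w_i=R_j$ if $\mathsf{p}_{i-1}=\mathsf{p}_{i+1}=z_{j-1}$; $w_i=-R_j$ if $\mathsf{p}_{i-1}=\mathsf{p}_{i+1}=z_{j+1}$; $w_i=T_j$ otherwise. For $0\le n\le M$, consider the maximal runs of consecutive indices $i$ with $\mathsf{p}_i\in\{z_n,\ldots,z_{M+1}\}$; the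 last one (containing index $L$) is the trunk run. $k_n$ is the number of non-trunk runs and $m_n$ the number of non-trunk runs of length at least 2; $\kappa^\prime(\mathsf{p})=(k_0,\ldots,k_M)$, $\beta^\prime(\mathsf{p})=(m_0,\ldots,m_M)$. Notation: $\tilde{k}=(k_1,\ldots,k_M,0)$; $\mathbb{1}=(1,\ldots,1)$; vector arithmetic entrywise; $s^d=\prod_{n=0}^M s_n^{d_n}$ with $0^0=1$. *)

theory Defs
  imports Complex_Main
begin

text \<open>A scattering sequence p = (p_0,...,p_L) is a list of depths of length L+1.\<close>

definition depths_ok :: "nat \<Rightarrow> (int \<Rightarrow> real) \<Rightarrow> bool" where
  "depths_ok M z \<longleftrightarrow> (\<forall>i j. -1 \<le> i \<longrightarrow> i < j \<longrightarrow> j \<le> int M + 1 \<longrightarrow> z i < z j)"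

definition medium :: "nat \<Rightarrow> (nat \<Rightarrow> real) \<Rightarrow> bool" where
  "medium M R \<longleftrightarrow> (\<forall>n\<le>M. -1 < R n \<and> R n < 1)"

definition trans_coeff :: "(nat \<Rightarrow> real) \<Rightarrow> nat \<Rightarrow> real" where
  "trans_coeff R n = sqrt (1 - (R n)\<^sup>2)"

definition tss :: "nat \<Rightarrow> (int \<Rightarrow> real) \<Rightarrow> real list \<Rightarrow> bool" where
  "tss M z p \<longleftrightarrow> p \<noteq> [] \<and>
     p ! 0 = z (-1) \<and> p ! (length p - 1) = z (int M + 1) \<and>
     (\<forall>i. 1 \<le> i \<and> i < length p - 1 \<longrightarrow> (\<exists>j. 0 \<le> j \<and> j \<le> int M \<and> p ! i = z j)) \<and>
     (\<forall>i < length p - 1. \<exists>j. -1 \<le> j \<and> j \<le> int M \<and>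
         {p ! i, p ! (i + 1)} = {z j, z (j + 1)})"

definition depth_index :: "nat \<Rightarrow> (int \<Rightarrow> real) \<Rightarrow> real \<Rightarrow> int" where
  "depth_index M z x = (THE j. -1 \<le> j \<and> j \<le> int M + 1 \<and> z j = x)"

definition loc_weight :: "nat \<Rightarrow> (int \<Rightarrow> real) \<Rightarrow> (nat \<Rightarrow> real) \<Rightarrow> real list \<Rightarrow> nat \<Rightarrow> real" where
  "loc_weight M z R p i =
     (let j = depth_index M z (p ! i) in
      if p ! (i - 1) = z (j - 1) \<and> p ! (i + 1) = z (j - 1) then R (nat j)
      else if p ! (i - 1) = z (j + 1) \<and> p ! (i + 1) = z (j + 1) then - R (nat j)
      else trans_coeff R (nat j))"

definition weight :: "nat \<Rightarrow> (int \<Rightarrow> real) \<Rightarrow> (nat \<Rightarrow> real) \<Rightarrow> real list \<Rightarrow> real" where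
  "weight M z R p = (\<Prod>i\<in>{1..<length p - 1}. loc_weight M z R p i)"

definition in_layer :: "nat \<Rightarrow> (int \<Rightarrow> real) \<Rightarrow> real list \<Rightarrow> nat \<Rightarrow> nat \<Rightarrow> bool" where
  "in_layer M z p n i \<longleftrightarrow> (\<exists>j. int n \<le> j \<and> j \<le> int M + 1 \<and> p ! i = z j)"

definition runs :: "nat \<Rightarrow> (int \<Rightarrow> real) \<Rightarrow> real list \<Rightarrow> nat \<Rightarrow> (nat \<times> nat) set" where
  "runs M z p n = {(a, b). a \<le> b \<and> b \<le> length p - 1 \<and>
      (\<forall>i\<in>{a..b}. in_layer M z p n i) \<and>
      (a = 0 \<or> \<not> in_layer M z p n (a - 1)) \<and>
      (b = length p - 1 \<or> \<not> in_layer M z p n (b + 1))}"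

definition kappa :: "nat \<Rightarrow> (int \<Rightarrow> real) \<Rightarrow> real list \<Rightarrow> nat \<Rightarrow> nat" where
  "kappa M z p n = card {(a, b) \<in> runs M z p n. b \<noteq> length p - 1}"

definition beta :: "nat \<Rightarrow> (int \<Rightarrow> real) \<Rightarrow> real list \<Rightarrow> nat \<Rightarrow> nat" where
  "beta M z p n = card {(a, b) \<in> runs M z p n. b \<noteq> length p - 1 \<and> a < b}"

definition kappa_tilde :: "nat \<Rightarrow> (int \<Rightarrow> real) \<Rightarrow> real list \<Rightarrow> nat \<Rightarrow> nat" where
  "kappa_tilde M z p n = (if n < M then kappa M z p (n + 1) else 0)"

end

theory Submission
  imports Defs
begin


locale walk =
  fixes q :: "nat \<Rightarrow> int" and L :: nat and M :: nat
  assumes q0: "q 0 = -1" and qL: "q L = int M + 1"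
  and step: "\<And>i. i < L \<Longrightarrow> q (Suc i) = q i + 1 \<or> q (Suc i) = q i - 1"
  and inner: "\<And>i. 0 < i \<Longrightarrow> i < L \<Longrightarrow> 0 \<le> q i \<and> q i \<le> int M"
begin

definition Up where "Up n t = {i. i < t \<and> q i = n - 1 \<and> q (Suc i) = n}"
definition Dn where "Dn n t = {i. i < t \<and> q i = n \<and> q (Suc i) = n - 1}"

lemma updn: "0 \<le> n \<Longrightarrow> t \<le> L \<Longrightarrow>
   int (card (Up n t)) = int (card (Dn n t)) + (if n \<le> q t then 1 else 0)"
proof (induction t)
  case 0
  then show ?case using q0 by (simp add: Up_def Dn_def)
next
  case (Suc t)
  have fu: "finite (Up n t)" "finite (Dn n t)" by (auto simp: Up_def Dn_def)
  have u: "Up n (Suc t) = (if q t = n - 1 \<and> q (Suc t) = n then insert t (Up n t) else Up n t)"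
    by (auto simp: Up_def less_Suc_eq)
  have d: "Dn n (Suc t) = (if q t = n \<and> q (Suc t) = n - 1 then insert t (Dn n t) else Dn n t)"
    by (auto simp: Dn_def less_Suc_eq)
  have nu: "t \<notin> Up n t" "t \<notin> Dn n t" by (auto simp: Up_def Dn_def)
  have IH: "int (card (Up n t)) = int (card (Dn n t)) + (if n \<le> q t then 1 else 0)"
    using Suc by simp
  have st: "q (Suc t) = q t + 1 \<or> q (Suc t) = q t - 1" using step Suc by simp
  show ?case unfolding u d using IH st fu nu by (auto split: if_splits)
qed

lemma updn_L: "0 \<le> n \<Longrightarrow> n \<le> int M + 1 \<Longrightarrow> card (Up n L) = card (Dn n L) + 1"
  using updn[of n L] qL by simp

definition V where "V n = {i. 0 < i \<and> i < L \<and> q i = n}"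

lemma V_fin: "finite (V n)" by (auto simp: V_def)

lemma Dn_sub: "0 \<le> n \<Longrightarrow> Dn n L = {i \<in> V n. q (Suc i) = n - 1}"
  using q0 by (auto simp: Dn_def V_def) (metis gr0I q0 zero_le_one neg_0_le_iff_le not_one_le_zero add.inverse_inverse)

lemma qV: "i \<in> V n \<Longrightarrow> (q (i - 1) = n - 1 \<or> q (i - 1) = n + 1) \<and> (q (Suc i) = n - 1 \<or> q (Suc i) = n + 1)"
proof -
  assume "i \<in> V n"
  then have i: "0 < i" "i < L" "q i = n" by (auto simp: V_def)
  have "q (Suc (i - 1)) = q (i - 1) + 1 \<or> q (Suc (i - 1)) = q (i - 1) - 1" using step[of "i - 1"] i by simp
  moreover have "Suc (i - 1) = i" using i by simp
  ultimately have a: "q (i - 1) = n - 1 \<or> q (i - 1) = n + 1" using i by auto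
  show ?thesis using a step[of i] i by auto
qed

lemma inBelow: "0 \<le> n \<Longrightarrow> n \<le> int M \<Longrightarrow> Suc ` Up n L = {i \<in> V n. q (i - 1) = n - 1}"
proof (intro equalityI subsetI)
  fix x assume n: "0 \<le> n" "n \<le> int M" and "x \<in> Suc ` Up n L"
  then obtain i where x: "x = Suc i" "i < L" "q i = n - 1" "q (Suc i) = n" by (auto simp: Up_def)
  have "Suc i \<noteq> L" using x qL n by auto
  then show "x \<in> {i \<in> V n. q (i - 1) = n - 1}" using x by (auto simp: V_def)
next
  fix x assume n: "0 \<le> n" "n \<le> int M" and "x \<in> {i \<in> V n. q (i - 1) = n - 1}"
  then have x: "0 < x" "x < L" "q x = n" "q (x - 1) = n - 1" by (auto simp: V_def)
  then have "x - 1 \<in> Up n L" "x = Suc (x - 1)" by (auto simp: Up_def)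
  then show "x \<in> Suc ` Up n L" by blast
qed

lemma inAbove: "0 \<le> n \<Longrightarrow> n \<le> int M \<Longrightarrow> Suc ` Dn (n+1) L = {i \<in> V n. q (i - 1) = n + 1}"
proof (intro equalityI subsetI)
  fix x assume n: "0 \<le> n" "n \<le> int M" and "x \<in> Suc ` Dn (n+1) L"
  then obtain i where x: "x = Suc i" "i < L" "q i = n + 1" "q (Suc i) = n" by (auto simp: Dn_def)
  have "Suc i \<noteq> L" using x qL n by auto
  then show "x \<in> {i \<in> V n. q (i - 1) = n + 1}" using x by (auto simp: V_def)
next
  fix x assume n: "0 \<le> n" "n \<le> int M" and "x \<in> {i \<in> V n. q (i - 1) = n + 1}"
  then have x: "0 < x" "x < L" "q x = n" "q (x - 1) = n + 1" by (auto simp: V_def)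
  then have "x - 1 \<in> Dn (n+1) L" "x = Suc (x - 1)" by (auto simp: Dn_def)
  then show "x \<in> Suc ` Dn (n+1) L" by blast
qed

lemma outUp: "0 \<le> n \<Longrightarrow> Up (n+1) L = {i \<in> V n. q (Suc i) = n + 1}"
proof (intro equalityI subsetI)
  fix x assume n: "0 \<le> n" and "x \<in> Up (n+1) L"
  then have x: "x < L" "q x = n" "q (Suc x) = n + 1" by (auto simp: Up_def)
  then have "0 < x" using q0 n by (cases x) auto
  then show "x \<in> {i \<in> V n. q (Suc i) = n + 1}" using x by (auto simp: V_def)
qed (auto simp: Up_def V_def)

definition "A n = {i \<in> V n. q (i - 1) = n - 1 \<and> q (Suc i) = n - 1}"
definition "B n = {i \<in> V n. q (i - 1) = n + 1 \<and> q (Suc i) = n + 1}"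
definition "P1 n = {i \<in> V n. q (i - 1) = n - 1 \<and> q (Suc i) = n + 1}"
definition "P2 n = {i \<in> V n. q (i - 1) = n + 1 \<and> q (Suc i) = n - 1}"

lemma fins: "finite (A n)" "finite (B n)" "finite (P1 n)" "finite (P2 n)"
  by (auto simp: A_def B_def P1_def P2_def V_def)

lemma split_card:
  assumes "\<And>i. i \<in> V n \<Longrightarrow> Q i \<Longrightarrow> i \<in> Y \<or> i \<in> Z" "Y \<subseteq> {i \<in> V n. Q i}" "Z \<subseteq> {i \<in> V n. Q i}" "Y \<inter> Z = {}"
   "finite Y" "finite Z"
  shows "card {i \<in> V n. Q i} = card Y + card Z"
proof -
  have "{i \<in> V n. Q i} = Y \<union> Z" using assms by blast
  then show ?thesis using assms card_Un_disjoint by metis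
qed

lemma counts:
  assumes n: "0 \<le> n" "n \<le> int M"
  shows "card (Up n L) = card (A n) + card (P1 n)"
    "card (Dn n L) = card (A n) + card (P2 n)"
    "card (Dn (n+1) L) = card (B n) + card (P2 n)"
    "card (Up (n+1) L) = card (B n) + card (P1 n)"
proof -
  have "card (Up n L) = card (Suc ` Up n L)" by (simp add: card_image)
  also have "\<dots> = card {i \<in> V n. q (i - 1) = n - 1}" using inBelow[OF n] by simp
  also have "\<dots> = card (A n) + card (P1 n)"
    apply (rule split_card)
    using qV by (auto simp: A_def P1_def fins V_fin)
  finally show "card (Up n L) = card (A n) + card (P1 n)" .
  show "card (Dn n L) = card (A n) + card (P2 n)"
    unfolding Dn_sub[OF n(1)]
    apply (rule split_card)
    using qV by (auto simp: A_def P2_def fins V_fin)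
  have "card (Dn (n+1) L) = card (Suc ` Dn (n+1) L)" by (simp add: card_image)
  also have "\<dots> = card {i \<in> V n. q (i - 1) = n + 1}" using inAbove[OF n] by simp
  also have "\<dots> = card (B n) + card (P2 n)"
    apply (rule split_card)
    using qV by (auto simp: B_def P2_def fins V_fin)
  finally show "card (Dn (n+1) L) = card (B n) + card (P2 n)" .
  show "card (Up (n+1) L) = card (B n) + card (P1 n)"
    unfolding outUp[OF n(1)]
    apply (rule split_card)
    using qV by (auto simp: B_def P1_def fins V_fin)
qed

lemma counts2:
  assumes n: "0 \<le> n" "n \<le> int M"
  shows "card (P1 n) = card (P2 n) + 1" "card (Dn (n+1) L) = card (B n) + card (P2 n)"
    "card (Dn n L) = card (A n) + card (P2 n)"
  using counts[OF n] updn_L[of n] n by auto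

definition runsP :: "(nat \<Rightarrow> bool) \<Rightarrow> (nat \<times> nat) set" where
  "runsP P = {(a, b). a \<le> b \<and> b \<le> L \<and>
      (\<forall>i\<in>{a..b}. P i) \<and> (a = 0 \<or> \<not> P (a - 1)) \<and> (b = L \<or> \<not> P (b + 1))}"

lemma runsP_cong: "(\<And>i. i \<le> L \<Longrightarrow> P i = P' i) \<Longrightarrow> runsP P = runsP P'"
  unfolding runsP_def
  apply (rule set_eqI)
  apply clarsimp
  apply (intro conj_cong refl)
  apply (auto simp: Suc_le_eq)
  done

lemma run_inj: "(a, b) \<in> runsP P \<Longrightarrow> (a', b) \<in> runsP P \<Longrightarrow> a = a'"
proof (rule ccontr)
  assume r: "(a, b) \<in> runsP P" "(a', b) \<in> runsP P" and ne: "a \<noteq> a'"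
  show False
  proof (cases "a < a'")
    case True
    then have "a' - 1 \<in> {a..b}" "a' \<noteq> 0" using r by (auto simp: runsP_def)
    then show False using r by (auto simp: runsP_def)
  next
    case False
    then have "a' < a" using ne by simp
    then have "a - 1 \<in> {a'..b}" "a \<noteq> 0" using r by (auto simp: runsP_def)
    then show False using r by (auto simp: runsP_def)
  qed
qed

lemma run_end: "0 \<le> n \<Longrightarrow> (a, b) \<in> runsP (\<lambda>i. n \<le> q i) \<Longrightarrow> b \<noteq> L \<Longrightarrow> b \<in> Dn n L"
proof -
  assume n: "0 \<le> n" and r: "(a, b) \<in> runsP (\<lambda>i. n \<le> q i)" and b: "b \<noteq> L"
  then have "b < L" "n \<le> q b" "\<not> n \<le> q (Suc b)" by (auto simp: runsP_def)
  then show ?thesis using step[of b] by (auto simp: Dn_def)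
qed

lemma run_exists: "0 \<le> n \<Longrightarrow> d \<in> Dn n L \<Longrightarrow> \<exists>a. (a, d) \<in> runsP (\<lambda>i. n \<le> q i)"
proof -
  assume n: "0 \<le> n" and d: "d \<in> Dn n L"
  then have dd: "d < L" "q d = n" "q (Suc d) = n - 1" by (auto simp: Dn_def)
  have d0: "0 < d" using dd n q0 by (cases d) auto
  define S where "S = {j. j < d \<and> q j < n}"
  have fS: "finite S" "0 \<in> S" using d0 q0 n by (auto simp: S_def)
  define g where "g = Max S"
  have gS: "g \<in> S" using fS g_def Max_in by blast
  have gmax: "\<And>j. j \<in> S \<Longrightarrow> j \<le> g" using fS g_def by simp
  have "(Suc g, d) \<in> runsP (\<lambda>i. n \<le> q i)"
    unfolding runsP_def
  proof (clarsimp, intro conjI ballI)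
    show "Suc g \<le> d" using gS by (simp add: S_def)
    show "d \<le> L" using dd by simp
    show "\<not> n \<le> q g" using gS by (simp add: S_def)
    show "d = L \<or> \<not> n \<le> q (Suc d)" using dd by simp
    fix i assume i: "i \<in> {Suc g..d}"
    show "n \<le> q i"
    proof (rule ccontr)
      assume "\<not> n \<le> q i"
      then have "i \<noteq> d" using dd by auto
      then have "i \<in> S" using i \<open>\<not> n \<le> q i\<close> by (auto simp: S_def)
      then show False using gmax i by fastforce
    qed
  qed
  then show ?thesis by blast
qed

lemma kappa_abs: "0 \<le> n \<Longrightarrow> card {(a, b) \<in> runsP (\<lambda>i. n \<le> q i). b \<noteq> L} = card (Dn n L)"
proof -
  assume n: "0 \<le> n"
  let ?S = "{(a, b) \<in> runsP (\<lambda>i. n \<le> q i). b \<noteq> L}"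
  have inj: "inj_on snd ?S"
  proof (rule inj_onI)
    fix x y assume xy: "x \<in> ?S" "y \<in> ?S" "snd x = snd y"
    obtain a b a' b' where e: "x = (a, b)" "y = (a', b')" by fastforce
    have "(a, b) \<in> runsP (\<lambda>i. n \<le> q i)" "(a', b) \<in> runsP (\<lambda>i. n \<le> q i)"
      using xy e by auto
    then have "a = a'" by (rule run_inj)
    then show "x = y" using e xy by simp
  qed
  have img: "snd ` ?S = Dn n L"
  proof (intro equalityI subsetI)
    fix x assume "x \<in> snd ` ?S" then show "x \<in> Dn n L" using run_end[OF n] by auto
  next
    fix d assume d: "d \<in> Dn n L"
    then obtain a where "(a, d) \<in> runsP (\<lambda>i. n \<le> q i)" using run_exists[OF n] by blast
    moreover have "d \<noteq> L" using d by (simp add: Dn_def)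
    ultimately have "(a, d) \<in> ?S" by simp
    then show "d \<in> snd ` ?S" by (rule rev_image_eqI) simp
  qed
  show ?thesis using card_image[OF inj] img by simp
qed

lemma beta_abs: "0 \<le> n \<Longrightarrow> card {(a, b) \<in> runsP (\<lambda>i. n \<le> q i). b \<noteq> L \<and> a < b} = card (P2 n)"
proof -
  assume n: "0 \<le> n"
  let ?S = "{(a, b) \<in> runsP (\<lambda>i. n \<le> q i). b \<noteq> L \<and> a < b}"
  have inj: "inj_on snd ?S"
  proof (rule inj_onI)
    fix x y assume xy: "x \<in> ?S" "y \<in> ?S" "snd x = snd y"
    obtain a b a' b' where e: "x = (a, b)" "y = (a', b')" by fastforce
    have "(a, b) \<in> runsP (\<lambda>i. n \<le> q i)" "(a', b) \<in> runsP (\<lambda>i. n \<le> q i)"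
      using xy e by auto
    then have "a = a'" by (rule run_inj)
    then show "x = y" using e xy by simp
  qed
  have img: "snd ` ?S = P2 n"
  proof (intro equalityI subsetI)
    fix x assume "x \<in> snd ` ?S"
    then obtain a where r: "(a, x) \<in> runsP (\<lambda>i. n \<le> q i)" "x \<noteq> L" "a < x" by auto
    have D: "x \<in> Dn n L" using run_end[OF n r(1,2)] .
    have "x - 1 \<in> {a..x}" using r by auto
    then have "n \<le> q (x - 1)" using r by (auto simp: runsP_def)
    moreover have "Suc (x - 1) = x" using r by simp
    moreover have "x - 1 < L" using D by (auto simp: Dn_def)
    ultimately have "q (x - 1) = n + 1" using step[of "x - 1"] D by (auto simp: Dn_def)
    then show "x \<in> P2 n" using D r by (auto simp: Dn_def P2_def V_def)
  next
    fix d assume d: "d \<in> P2 n"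
    then have D: "d \<in> Dn n L" using Dn_sub[OF n] by (auto simp: P2_def)
    obtain a where r: "(a, d) \<in> runsP (\<lambda>i. n \<le> q i)" using run_exists[OF n D] by blast
    have "a < d"
    proof (rule ccontr)
      assume "\<not> a < d"
      then have "a = d" using r by (auto simp: runsP_def)
      moreover have "0 < d" using d by (auto simp: P2_def V_def)
      ultimately have "\<not> n \<le> q (d - 1)" using r by (auto simp: runsP_def)
      then show False using d by (auto simp: P2_def)
    qed
    moreover have "d \<noteq> L" using D by (simp add: Dn_def)
    ultimately have "(a, d) \<in> ?S" using r by simp
    then show "d \<in> snd ` ?S" by (rule rev_image_eqI) simp
  qed
  show ?thesis using card_image[OF inj] img by simp
qed

definition lw :: "(nat \<Rightarrow> real) \<Rightarrow> (nat \<Rightarrow> real) \<Rightarrow> nat \<Rightarrow> real" where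
  "lw R T i = (if q (i - 1) = q i - 1 \<and> q (Suc i) = q i - 1 then R (nat (q i))
     else if q (i - 1) = q i + 1 \<and> q (Suc i) = q i + 1 then - R (nat (q i)) else T (nat (q i)))"

lemma level_prod:
  fixes n :: nat
  shows "(\<Prod>i\<in>V (int n). lw R T i) =
     R n ^ card (A (int n)) * (- R n) ^ card (B (int n)) * T n ^ (card (P1 (int n)) + card (P2 (int n)))"
proof -
  let ?n = "int n"
  have V: "V ?n = A ?n \<union> (B ?n \<union> (P1 ?n \<union> P2 ?n))"
    using qV[of _ ?n] by (auto simp: A_def B_def P1_def P2_def)
  have d1: "A ?n \<inter> (B ?n \<union> (P1 ?n \<union> P2 ?n)) = {}" "B ?n \<inter> (P1 ?n \<union> P2 ?n) = {}" "P1 ?n \<inter> P2 ?n = {}"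
    by (auto simp: A_def B_def P1_def P2_def)
  have a: "(\<Prod>i\<in>A ?n. lw R T i) = R n ^ card (A ?n)"
    by (subst prod.cong[OF refl, where h = "\<lambda>_. R n"]) (auto simp: A_def V_def lw_def)
  have b: "(\<Prod>i\<in>B ?n. lw R T i) = (- R n) ^ card (B ?n)"
    by (subst prod.cong[OF refl, where h = "\<lambda>_. - R n"]) (auto simp: B_def V_def lw_def)
  have p1: "(\<Prod>i\<in>P1 ?n. lw R T i) = T n ^ card (P1 ?n)"
    by (subst prod.cong[OF refl, where h = "\<lambda>_. T n"]) (auto simp: P1_def V_def lw_def)
  have p2: "(\<Prod>i\<in>P2 ?n. lw R T i) = T n ^ card (P2 ?n)"
    by (subst prod.cong[OF refl, where h = "\<lambda>_. T n"]) (auto simp: P2_def V_def lw_def)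
  show ?thesis
    unfolding V
    by (simp add: prod.union_disjoint fins d1 a b p1 p2 power_add mult.assoc)
qed

lemma prod_abs:
  "(\<Prod>i\<in>{1..<L}. lw R T i) = (\<Prod>n\<in>{0..M}. R n ^ card (A (int n)) * (- R n) ^ card (B (int n))
       * T n ^ (card (P1 (int n)) + card (P2 (int n))))"
proof -
  have "(\<Prod>i\<in>{1..<L}. lw R T i) = (\<Prod>n\<in>{0..M}. \<Prod>i\<in>{x \<in> {1..<L}. nat (q x) = n}. lw R T i)"
    by (rule prod.group[symmetric]) (use inner in \<open>auto simp: nat_le_iff\<close>)
  also have "\<dots> = (\<Prod>n\<in>{0..M}. \<Prod>i\<in>V (int n). lw R T i)"
  proof (rule prod.cong[OF refl])
    fix n assume "n \<in> {0..M}"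
    have "{x \<in> {1..<L}. nat (q x) = n} = V (int n)"
      using inner by (force simp: V_def)
    then show "(\<Prod>i\<in>{x \<in> {1..<L}. nat (q x) = n}. lw R T i) = (\<Prod>i\<in>V (int n). lw R T i)" by simp
  qed
  also have "\<dots> = (\<Prod>n\<in>{0..M}. R n ^ card (A (int n)) * (- R n) ^ card (B (int n))
       * T n ^ (card (P1 (int n)) + card (P2 (int n))))"
    by (simp add: level_prod)
  finally show ?thesis .
qed

lemma Dn_top: "Dn (int M + 1) L = {}"
proof -
  { fix i assume "i \<in> Dn (int M + 1) L"
    then have i: "i < L" "q i = int M + 1" by (auto simp: Dn_def)
    then have False using inner[of i] q0 by (cases i) auto }
  then show ?thesis by blast
qed

end

lemma zinj:
  assumes "depths_ok M z" "-1 \<le> i" "i \<le> int M + 1" "-1 \<le> j" "j \<le> int M + 1" "z i = z j"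
  shows "i = j"
proof (rule ccontr)
  assume "i \<noteq> j"
  then consider "i < j" | "j < i" by linarith
  then show False
  proof cases
    case 1 then have "z i < z j" using assms unfolding depths_ok_def by blast
    then show False using assms by simp
  next
    case 2 then have "z j < z i" using assms unfolding depths_ok_def by blast
    then show False using assms by simp
  qed
qed

lemma di:
  assumes "depths_ok M z" "-1 \<le> j" "j \<le> int M + 1"
  shows "depth_index M z (z j) = j"
  unfolding depth_index_def
  by (rule the_equality) (use assms zinj[OF assms(1)] in auto)




theorem lemma3:
  fixes M :: nat and z :: "int \<Rightarrow> real" and R :: "nat \<Rightarrow> real" and p :: "real list"
  assumes "M \<ge> 1"
    and "depths_ok M z"
    and "medium M R"
    and "tss M z p"
  shows "weight M z R p =
    (\<Prod>n\<in>{0..M}.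
        (- R n) ^ (kappa_tilde M z p n - beta M z p n)
      * (R n) ^ (kappa M z p n - beta M z p n)
      * (trans_coeff R n) ^ (2 * beta M z p n + 1))"
proof -
  note dz = assms(2)
  define L where "L = length p - 1"
  define q where "q i = depth_index M z (p ! i)" for i
  have ne: "p \<noteq> []" and p0: "p ! 0 = z (-1)" and pL: "p ! L = z (int M + 1)"
    and pint: "\<And>i. 1 \<le> i \<Longrightarrow> i < L \<Longrightarrow> \<exists>j. 0 \<le> j \<and> j \<le> int M \<and> p ! i = z j"
    and padj: "\<And>i. i < L \<Longrightarrow> \<exists>j. -1 \<le> j \<and> j \<le> int M \<and> {p ! i, p ! (i + 1)} = {z j, z (j + 1)}"
    using assms(4) unfolding tss_def L_def by auto
  have q0: "q 0 = -1" using p0 di[OF dz, of "-1"] by (simp add: q_def)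
  have qL: "q L = int M + 1" using pL di[OF dz, of "int M + 1"] by (simp add: q_def)
  have L0: "0 < L"
  proof (rule ccontr)
    assume "\<not> 0 < L" then have "L = 0" by simp
    then show False using q0 qL by simp
  qed
  have inner: "0 \<le> q i \<and> q i \<le> int M" if h: "0 < i" "i < L" for i
  proof -
    obtain j where "0 \<le> j" "j \<le> int M" "p ! i = z j" using pint[of i] h by (auto simp: Suc_le_eq)
    then show ?thesis using di[OF dz, of j] by (simp add: q_def)
  qed
  have pq: "p ! i = z (q i) \<and> -1 \<le> q i \<and> q i \<le> int M + 1" if h: "i \<le> L" for i
  proof (cases "i = 0")
    case True then show ?thesis using q0 p0 by simp
  next
    case False
    show ?thesis
    proof (cases "i = L")
      case True then show ?thesis using qL pL by simp
    next
      case False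
      then obtain j where "0 \<le> j" "j \<le> int M" "p ! i = z j" using pint[of i] h \<open>i \<noteq> 0\<close> by (auto simp: Suc_le_eq)
      then show ?thesis using di[OF dz, of j] by (simp add: q_def)
    qed
  qed
  have step: "q (Suc i) = q i + 1 \<or> q (Suc i) = q i - 1" if h: "i < L" for i
  proof -
    obtain j where j: "-1 \<le> j" "j \<le> int M" "{p ! i, p ! (i + 1)} = {z j, z (j + 1)}"
      using padj[OF h] by auto
    let ?a = "q i" and ?b = "q (Suc i)"
    have pa: "p ! i = z ?a" "-1 \<le> ?a" "?a \<le> int M + 1" using pq[of i] that by auto
    have pb: "p ! (i + 1) = z ?b" "-1 \<le> ?b" "?b \<le> int M + 1" using pq[of "Suc i"] that by auto
    have s: "{z ?a, z ?b} = {z j, z (j + 1)}" using j pa pb by simp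
    have e1: "z ?a = z j \<or> z ?a = z (j + 1)" "z ?b = z j \<or> z ?b = z (j + 1)"
      "z j = z ?a \<or> z j = z ?b" "z (j + 1) = z ?a \<or> z (j + 1) = z ?b"
      using s by blast+
    have r: "\<And>x y. -1 \<le> x \<Longrightarrow> x \<le> int M + 1 \<Longrightarrow> -1 \<le> y \<Longrightarrow> y \<le> int M + 1 \<Longrightarrow> z x = z y \<Longrightarrow> x = y"
      using zinj[OF dz] by blast
    have x1: "?a = j \<or> ?a = j + 1" using e1(1) r[of ?a j] r[of ?a "j+1"] pa j by linarith
    have x2: "?b = j \<or> ?b = j + 1" using e1(2) r[of ?b j] r[of ?b "j+1"] pb j by linarith
    have x3: "j = ?a \<or> j = ?b" using e1(3) r[of j ?a] r[of j ?b] pa pb j by linarith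
    have x4: "j + 1 = ?a \<or> j + 1 = ?b" using e1(4) r[of "j+1" ?a] r[of "j+1" ?b] pa pb j by linarith
    show ?thesis using x1 x2 x3 x4 by linarith
  qed
  interpret w: walk q L M
    by unfold_locales (use q0 qL step inner in auto)
  have lwe: "loc_weight M z R p i = w.lw R (trans_coeff R) i" if "i \<in> {1..<L}" for i
  proof -
    have i: "1 \<le> i" "i < L" using that by auto
    have qi: "0 \<le> q i" "q i \<le> int M" using inner[of i] i by auto
    have pm: "p ! (i - 1) = z (q (i - 1))" "-1 \<le> q (i - 1)" "q (i - 1) \<le> int M + 1" using pq[of "i - 1"] i by auto
    have pp: "p ! (i + 1) = z (q (Suc i))" "-1 \<le> q (Suc i)" "q (Suc i) \<le> int M + 1" using pq[of "Suc i"] i by auto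
    have r: "\<And>x y. -1 \<le> x \<Longrightarrow> x \<le> int M + 1 \<Longrightarrow> -1 \<le> y \<Longrightarrow> y \<le> int M + 1 \<Longrightarrow> z x = z y \<longleftrightarrow> x = y"
      using zinj[OF dz] by blast
    have e: "p ! (i - 1) = z (q i - 1) \<longleftrightarrow> q (i - 1) = q i - 1"
      "p ! (i - 1) = z (q i + 1) \<longleftrightarrow> q (i - 1) = q i + 1"
      "p ! (i + 1) = z (q i - 1) \<longleftrightarrow> q (Suc i) = q i - 1"
      "p ! (i + 1) = z (q i + 1) \<longleftrightarrow> q (Suc i) = q i + 1"
      using pm pp qi r by auto
    show ?thesis unfolding loc_weight_def w.lw_def Let_def q_def[symmetric] e by simp
  qed
  have wt: "weight M z R p = (\<Prod>i\<in>{1..<L}. w.lw R (trans_coeff R) i)"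
    unfolding weight_def L_def[symmetric] using lwe by (rule prod.cong[OF refl])
  have inl: "in_layer M z p n i \<longleftrightarrow> int n \<le> q i" if "i \<le> L" for n i
  proof
    assume "in_layer M z p n i"
    then obtain j where j: "int n \<le> j" "j \<le> int M + 1" "p ! i = z j" by (auto simp: in_layer_def)
    then have "j = q i" using pq[OF that] zinj[OF dz, of j "q i"] by auto
    then show "int n \<le> q i" using j by simp
  next
    assume "int n \<le> q i"
    then show "in_layer M z p n i" using pq[OF that] by (auto simp: in_layer_def)
  qed
  have runs: "runs M z p n = w.runsP (\<lambda>i. int n \<le> q i)" for n
  proof -
    have "runs M z p n = w.runsP (in_layer M z p n)"
      unfolding runs_def w.runsP_def L_def[symmetric] by (rule refl)
    also have "\<dots> = w.runsP (\<lambda>i. int n \<le> q i)"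
      by (rule w.runsP_cong) (use inl in auto)
    finally show ?thesis .
  qed
  have kap: "kappa M z p n = card (w.Dn (int n) L)" for n
    unfolding kappa_def runs L_def[symmetric] using w.kappa_abs[of "int n"] by simp
  have bet: "beta M z p n = card (w.P2 (int n))" for n
    unfolding beta_def runs L_def[symmetric] using w.beta_abs[of "int n"] by simp
  have kt: "kappa_tilde M z p n = card (w.Dn (int n + 1) L)" if "n \<le> M" for n
  proof (cases "n < M")
    case True then show ?thesis using kap[of "n+1"] by (simp add: kappa_tilde_def ac_simps)
  next
    case False then have "n = M" using that by simp
    then show ?thesis using w.Dn_top by (simp add: kappa_tilde_def)
  qed
  show ?thesis
    unfolding wt w.prod_abs
  proof (rule prod.cong[OF refl])
    fix n assume n: "n \<in> {0..M}"
    have c: "card (w.P1 (int n)) = card (w.P2 (int n)) + 1"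
      "card (w.Dn (int n + 1) L) = card (w.B (int n)) + card (w.P2 (int n))"
      "card (w.Dn (int n) L) = card (w.A (int n)) + card (w.P2 (int n))"
      using w.counts2[of "int n"] n by auto
    show "R n ^ card (w.A (int n)) * (- R n) ^ card (w.B (int n)) *
          trans_coeff R n ^ (card (w.P1 (int n)) + card (w.P2 (int n))) =
          (- R n) ^ (kappa_tilde M z p n - beta M z p n) * R n ^ (kappa M z p n - beta M z p n) *
          trans_coeff R n ^ (2 * beta M z p n + 1)"
      using n by (simp add: kt kap bet c mult_2)
  qed
qed


end
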